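(* Let $r\ge 2$ and $k\ge 3$ be integers. There is a constant $C=C(k,r)$ such that for every positive integer $n$ there exists a coloring of $[n]=\{1,2,\ldots,n\}$ with $r$ colors in which the number of monochromatic $k$-APs is at most $\frac{1}{2(k-1)r^{k-1}}n^2+Cn$.
   Context: A $k$-term arithmetic progression ($k$-AP) in $[n]$ is a sequence $a,a+d,a+2d,\ldots,a+(k-1)d$ of elements of $[n]$ with $d\ge 1$ an integer. It is monochromatic under a coloring if all $k$ of its terms receive the same color. *)

theory Defs
  imports Complex_Main
begin

definition kAPs :: "nat \<Rightarrow> nat \<Rightarrow> (nat \<times> nat) set" where
  "kAPs k n = {(a, d). 1 \<le> a \<and> 1 \<le> d \<and> (\<forall>i<k. a + i * d \<in> {1..n})}"

definition mono_AP :: "(nat \<Rightarrow> nat) \<Rightarrow> nat \<Rightarrow> nat \<times> nat \<Rightarrow> bool" where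
  "mono_AP c k ap = (\<forall>i<k. c (fst ap + i * snd ap) = c (fst ap))"

definition num_mono_kAPs :: "(nat \<Rightarrow> nat) \<Rightarrow> nat \<Rightarrow> nat \<Rightarrow> nat" where
  "num_mono_kAPs c k n = card {ap \<in> kAPs k n. mono_AP c k ap}"

end

theory Submission
  imports Defs "HOL-Library.FuncSet"
begin

lemma card_const_on:
  assumes S: "finite S" and T: "T \<subseteq> S" and t0: "t0 \<in> T"
  shows "card {c \<in> PiE S (\<lambda>_. R). \<forall>x\<in>T. c x = c t0} = card R ^ (card S - card T + 1)"
proof -
  define S' where "S' = S - (T - {t0})"
  have b: "bij_betw (\<lambda>c. restrict c S') {c \<in> PiE S (\<lambda>_. R). \<forall>x\<in>T. c x = c t0} (PiE S' (\<lambda>_. R))"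
  proof (rule bij_betw_byWitness[where f' = "\<lambda>h. \<lambda>x. if x \<in> S then (if x \<in> T then h t0 else h x) else undefined"])
    show "\<forall>a\<in>{c \<in> PiE S (\<lambda>_. R). \<forall>x\<in>T. c x = c t0}.
       (\<lambda>x. if x \<in> S then if x \<in> T then restrict a S' t0 else restrict a S' x else undefined) = a"
    proof
      fix a assume a: "a \<in> {c \<in> PiE S (\<lambda>_. R). \<forall>x\<in>T. c x = c t0}"
      have "t0 \<in> S'" using t0 T by (auto simp: S'_def)
      show "(\<lambda>x. if x \<in> S then if x \<in> T then restrict a S' t0 else restrict a S' x else undefined) = a"
      proof
        fix x show "(if x \<in> S then if x \<in> T then restrict a S' t0 else restrict a S' x else undefined) = a x"
          using a \<open>t0 \<in> S'\<close> by (cases "x \<in> S"; cases "x \<in> T") (auto simp: S'_def PiE_def extensional_def)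
      qed
    qed
    show "\<forall>a'\<in>PiE S' (\<lambda>_. R). restrict (\<lambda>x. if x \<in> S then if x \<in> T then a' t0 else a' x else undefined) S' = a'"
    proof
      fix a' assume a': "a' \<in> PiE S' (\<lambda>_. R)"
      show "restrict (\<lambda>x. if x \<in> S then if x \<in> T then a' t0 else a' x else undefined) S' = a'"
      proof
        fix x show "restrict (\<lambda>x. if x \<in> S then if x \<in> T then a' t0 else a' x else undefined) S' x = a' x"
          using a' t0 T by (cases "x \<in> S'") (auto simp: S'_def PiE_def extensional_def)
      qed
    qed
    show "(\<lambda>c. restrict c S') ` {c \<in> PiE S (\<lambda>_. R). \<forall>x\<in>T. c x = c t0} \<subseteq> PiE S' (\<lambda>_. R)"
    proof
      fix h assume "h \<in> (\<lambda>c. restrict c S') ` {c \<in> PiE S (\<lambda>_. R). \<forall>x\<in>T. c x = c t0}"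
      then obtain c where "c \<in> PiE S (\<lambda>_. R)" "h = restrict c S'" by auto
      moreover have "S' \<subseteq> S" by (auto simp: S'_def)
      ultimately show "h \<in> PiE S' (\<lambda>_. R)" by (auto simp: PiE_iff)
    qed
    show "(\<lambda>h. \<lambda>x. if x \<in> S then (if x \<in> T then h t0 else h x) else undefined) ` PiE S' (\<lambda>_. R) \<subseteq> {c \<in> PiE S (\<lambda>_. R). \<forall>x\<in>T. c x = c t0}"
      using t0 T by (auto simp: S'_def PiE_def extensional_def Pi_iff)
  qed
  have fT: "finite T" using T S finite_subset by blast
  have "card S' = card S - (card T - 1)"
    unfolding S'_def using T t0 fT by (subst card_Diff_subset) (auto simp: card_Diff_singleton)
  moreover have "card T \<le> card S" "card T \<ge> 1" using T S t0 fT card_mono by (auto simp: Suc_le_eq card_gt_0_iff)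
  ultimately have "card S' = card S - card T + 1" by simp
  with bij_betw_same_card[OF b] show ?thesis
    using S by (simp add: card_PiE S'_def)
qed

lemma sum_bound:
  fixes m n D :: nat
  assumes "m * D \<le> n"
  shows "2 * m * (\<Sum>d\<in>{1..D}. n - m * d) \<le> n ^ 2"
proof -
  have eq: "2 * int m * (\<Sum>d\<in>{1..D}. int n - int m * int d) = 2 * int m * int n * int D - int m ^ 2 * int D * (int D + 1)"
  proof (induction D)
    case (Suc D)
    have "2 * int m * (\<Sum>d\<in>{1..Suc D}. int n - int m * int d) = 2 * int m * (\<Sum>d\<in>{1..D}. int n - int m * int d) + 2 * int m * (int n - int m * int (Suc D))"
      by (simp add: distrib_left)
    also have "\<dots> = 2 * int m * int n * int (Suc D) - int m ^ 2 * int (Suc D) * (int (Suc D) + 1)"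
      unfolding Suc.IH by (simp add: algebra_simps power2_eq_square)
    finally show ?case .
  qed simp
  have "(\<Sum>d\<in>{1..D}. int (n - m * d)) = (\<Sum>d\<in>{1..D}. int n - int m * int d)"
  proof (rule sum.cong)
    fix d assume "d \<in> {1..D}"
    then have "m * d \<le> n" using assms by (meson atLeastAtMost_iff le_trans mult_le_mono2)
    then show "int (n - m * d) = int n - int m * int d" by (simp add: of_nat_diff)
  qed simp
  then have "int (2 * m * (\<Sum>d\<in>{1..D}. n - m * d)) = 2 * int m * int n * int D - int m ^ 2 * int D * (int D + 1)"
    using eq by (simp add: of_nat_sum)
  also have "\<dots> \<le> int n ^ 2"
  proof -
    have "0 \<le> (int n - int m * int D) ^ 2" by simp
    moreover have "0 \<le> int m ^ 2 * int D" by simp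
    moreover have "2*int m*int n*int D - int m^2*int D*(int D+1) = int n^2 - (int n - int m*int D)^2 - int m^2*int D"
      by (simp add: algebra_simps power2_eq_square)
    ultimately show ?thesis by linarith
  qed
  finally show ?thesis by (metis of_nat_le_iff of_nat_power)
qed

lemma card_filter_sum: "finite A \<Longrightarrow> card {x\<in>A. P x} = (\<Sum>x\<in>A. if P x then 1 else 0)"
  by (simp add: sum.inter_filter[symmetric])

theorem mainTheorem1:
  fixes r k :: nat
  assumes "r \<ge> 2" and "k \<ge> 3"
  shows "\<exists>C::real. \<forall>n::nat. n \<ge> 1 \<longrightarrow>
           (\<exists>c :: nat \<Rightarrow> nat. c ` {1..n} \<subseteq> {..<r} \<and>
              real (num_mono_kAPs c k n)
                \<le> real n ^ 2 / (2 * (real k - 1) * real r ^ (k - 1)) + C * real n)"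
proof (rule exI[of _ 0], intro allI impI)
  fix n :: nat assume n1: "n \<ge> 1"
  define m where "m = k - 1"
  have m1: "m \<ge> 1" using assms by (simp add: m_def)
  define K where "K = kAPs k n"
  define D where "D = (n - 1) div m"
  have Ksub: "(\<lambda>(a,d). (d,a)) ` K \<subseteq> Sigma {1..D} (\<lambda>d. {1..n - m*d})"
  proof
    fix ap' assume "ap' \<in> (\<lambda>(a,d). (d,a)) ` K"
    then obtain ap where "ap \<in> K" "ap' = (\<lambda>(a,d). (d,a)) ap" by blast
    then obtain a d where ap: "ap = (a, d)" "1 \<le> a" "1 \<le> d" "\<forall>i<k. a + i * d \<in> {1..n}"
      by (auto simp: K_def kAPs_def)
    have "a + m * d \<le> n" using ap(4)[rule_format, of m] assms by (auto simp: m_def)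
    then have md: "m * d \<le> n - 1" using ap(2) by linarith
    have "d = (m * d) div m" using m1 by simp
    also have "\<dots> \<le> D" unfolding D_def using md by (rule div_le_mono)
    finally show "ap' \<in> Sigma {1..D} (\<lambda>d. {1..n - m*d})"
      using ap \<open>a + m * d \<le> n\<close> \<open>ap' = _\<close> by auto
  qed
  have injs: "inj_on (\<lambda>(a::nat,d::nat). (d,a)) K" by (auto simp: inj_on_def)
  have "finite ((\<lambda>(a,d). (d,a)) ` K)" using Ksub finite_subset by blast
  then have finK: "finite K" using finite_image_iff[OF injs] by blast
  have mD: "m * D \<le> n"
    unfolding D_def using times_div_less_eq_dividend[of m "n - 1"] by linarith
  have "card K \<le> (\<Sum>d\<in>{1..D}. n - m * d)"
    using card_mono[OF _ Ksub] card_image[OF injs] by (simp add: card_SigmaI)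
  with sum_bound[OF mD] have cK: "2 * m * card K \<le> n ^ 2"
    by (meson le_trans mult_le_mono2)
  define F where "F = PiE {1..n} (\<lambda>_::nat. {..<r})"
  have finF: "finite F" unfolding F_def by (simp add: finite_PiE)
  have cardF: "card F = r ^ n" unfolding F_def by (simp add: card_PiE)
  have Fne: "F \<noteq> {}" unfolding F_def using assms by (auto simp: PiE_eq_empty_iff lessThan_empty_iff)
  have each: "card {c\<in>F. mono_AP c k ap} = r ^ (n - m)" if ap: "ap \<in> K" for ap
  proof -
    obtain a d where ap': "ap = (a, d)" "1 \<le> a" "1 \<le> d" "\<forall>i<k. a + i * d \<in> {1..n}"
      using ap by (auto simp: K_def kAPs_def)
    define T where "T = (\<lambda>i. a + i * d) ` {..<k}"
    have inj: "inj_on (\<lambda>i. a + i * d) {..<k}" using ap'(3) by (auto simp: inj_on_def)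
    have cT: "card T = k" unfolding T_def using card_image[OF inj] by simp
    have TS: "T \<subseteq> {1..n}" using ap'(4) by (auto simp: T_def)
    have t0: "a \<in> T" unfolding T_def using assms by (auto intro!: image_eqI[where x=0])
    have "k \<le> n" using card_mono[OF _ TS] cT by simp
    have eq: "{c\<in>F. mono_AP c k ap} = {c \<in> PiE {1..n} (\<lambda>_. {..<r}). \<forall>x\<in>T. c x = c a}"
      by (auto simp: F_def mono_AP_def ap'(1) T_def)
    have "n - m = Suc (n - k)" using \<open>k \<le> n\<close> assms by (simp add: m_def)
    then show ?thesis unfolding eq using card_const_on[OF _ TS t0, of "{..<r}"] cT \<open>k \<le> n\<close> assms
      by simp
  qed
  have sumeq: "(\<Sum>c\<in>F. num_mono_kAPs c k n) = card K * r ^ (n - m)"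
  proof -
    have "(\<Sum>c\<in>F. num_mono_kAPs c k n) = (\<Sum>c\<in>F. \<Sum>ap\<in>K. if mono_AP c k ap then 1 else 0)"
      unfolding num_mono_kAPs_def K_def[symmetric] using finK by (simp add: card_filter_sum)
    also have "\<dots> = (\<Sum>ap\<in>K. \<Sum>c\<in>F. if mono_AP c k ap then 1 else 0)" by (rule sum.swap)
    also have "\<dots> = (\<Sum>ap\<in>K. r ^ (n - m))"
      using each finF by (simp add: card_filter_sum)
    finally show ?thesis by simp
  qed
  have pw: "card K * r ^ (n - m) * r ^ m = card K * r ^ n"
  proof (cases "K = {}")
    case False
    then obtain ap where "ap \<in> K" by blast
    then obtain a d where ap': "1 \<le> a" "1 \<le> d" "\<forall>i<k. a + i * d \<in> {1..n}"
      by (auto simp: K_def kAPs_def)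
    have "a + m * d \<le> n" using ap'(3)[rule_format, of m] assms by (auto simp: m_def)
    then have "m \<le> n" using ap' by (metis add_leD2 le_trans mult_le_mono2 nat_mult_1_right)
    then show ?thesis by (simp add: power_add[symmetric])
  qed simp
  have "\<exists>c\<in>F. num_mono_kAPs c k n * r ^ m \<le> card K"
  proof (rule ccontr)
    assume "\<not> ?thesis"
    then have lt: "\<forall>c\<in>F. card K < num_mono_kAPs c k n * r ^ m" by (simp add: not_le)
    have "(\<Sum>c\<in>F. card K) < (\<Sum>c\<in>F. num_mono_kAPs c k n * r ^ m)"
      by (rule sum_strict_mono[OF finF Fne]) (use lt in blast)
    also have "\<dots> = card K * r ^ n" using sumeq pw by (simp add: sum_distrib_right[symmetric])
    finally show False using cardF by (simp add: mult.commute)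
  qed
  then obtain c where cF: "c \<in> F" and cle: "num_mono_kAPs c k n * r ^ m \<le> card K" by blast
  have rpos: "real r ^ m > 0" using assms by simp
  have "real (num_mono_kAPs c k n) * real r ^ m \<le> real (card K)"
    using cle by (metis of_nat_le_iff of_nat_mult of_nat_power)
  moreover have "2 * real m * real (card K) \<le> real n ^ 2"
    using cK by (metis of_nat_le_iff of_nat_mult of_nat_power of_nat_numeral)
  ultimately have "2 * real m * real r ^ m * real (num_mono_kAPs c k n) \<le> real n ^ 2"
    using m1 by (smt (verit) mult.commute mult.left_commute mult_left_mono of_nat_0_le_iff)
  moreover have "real k - 1 = real m" using assms by (simp add: m_def of_nat_diff)
  moreover have km: "k - 1 = m" by (simp add: m_def)
  ultimately have "real (num_mono_kAPs c k n) \<le> real n ^ 2 / (2 * real m * real r ^ m)"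
    using rpos m1 by (simp add: pos_le_divide_eq mult.commute mult.left_commute)
  then have "real (num_mono_kAPs c k n) \<le> real n ^ 2 / (2 * (real k - 1) * real r ^ (k - 1))"
    using km \<open>real k - 1 = real m\<close> by simp
  moreover have "c ` {1..n} \<subseteq> {..<r}" using cF by (auto simp: F_def)
  ultimately show "\<exists>c :: nat \<Rightarrow> nat. c ` {1..n} \<subseteq> {..<r} \<and>
              real (num_mono_kAPs c k n)
                \<le> real n ^ 2 / (2 * (real k - 1) * real r ^ (k - 1)) + 0 * real n" by auto
qed

end
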